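(* There is an absolute constant $C>0$ such that for every $N\in\mathbb{N}$, all functions $f_0,f_1,f_2\colon\mathbb{Z}^2\to\mathbb{C}$ with $|f_i|\le1$ supported in $[\pm2N]^2$, and every $f_3\colon\mathbb{Z}\to\mathbb{C}$ with $|f_3|\le1$ supported in $[N]$, \[ \Big|\mathbb{E}_{x\in[\pm2N]^2,\,n\in[N]}f_0(x)f_1(x+ne_1)f_2(x+ne_2)f_3(n)\Big|\le CN^{-1/2}\|f_3\|_{U^3}, \] where $e_1=(1,0)$, $e_2=(0,1)$.
   Context: $[N]=\{1,\dots,N\}$, $[\pm N]=[-N,N]\cap\mathbb{Z}$, $\mathbb{E}_{a\in A}$ is the average over the finite set $A$. For $f\colon\mathbb{Z}\to\mathbb{C}$ and $h\in\mathbb{Z}$, $\Delta_hf(x)=f(x)\overline{f(x+h)}$, $\Delta_{h_1,\dots,h_s}=\Delta_{h_1}\cdots\Delta_{h_s}$. For finitely supported $f$, the unnormalised Gowers norm is $\|f\|_{U^s}=\big(\sum_{x,h_1,\dots,h_s\in\mathbb{Z}}\Delta_{h_1,\dots,h_s}f(x)\big)^{1/2^s}$. *)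

theory Defs
  imports "HOL-Analysis.Analysis"
begin

definition mdiff :: "int \<Rightarrow> (int \<Rightarrow> complex) \<Rightarrow> int \<Rightarrow> complex" where
  "mdiff h f x = f x * cnj (f (x + h))"

text \<open>The sum is an infinite sum over Z^4, which is a finite sum for finitely supported f.\<close>
definition gowers_U3 :: "(int \<Rightarrow> complex) \<Rightarrow> real" where
  "gowers_U3 f =
     (Re (infsum (\<lambda>(x, h1, h2, h3). mdiff h1 (mdiff h2 (mdiff h3 f)) x)
                 (UNIV :: (int \<times> int \<times> int \<times> int) set))) powr (1/8)"

end

theory Submission
  imports Defs
begin


lemma shift_sum:
  fixes g :: "int \<Rightarrow> 'a::comm_monoid_add"
  assumes "\<And>x. g x \<noteq> 0 \<Longrightarrow> \<bar>x\<bar> \<le> R" "R + \<bar>c\<bar> \<le> K"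
  shows "(\<Sum>x\<in>{-K..K}. g (x + c)) = (\<Sum>x\<in>{-K..K}. g x)"
proof -
  have "(\<Sum>x\<in>{-K..K}. g (x + c)) = (\<Sum>y\<in>{-K+c..K+c}. g y)"
    by (rule sum.reindex_bij_witness[of _ "\<lambda>y. y - c" "\<lambda>x. x + c"]) auto
  also have "(\<Sum>y\<in>{-K+c..K+c}. g y) = (\<Sum>y\<in>{-R..R}. g y)"
  proof (rule sum.mono_neutral_right)
    show "{-R..R} \<subseteq> {-K+c..K+c}" using assms(2) by (intro subsetI) (auto simp: abs_if split: if_splits)
    show "\<forall>i\<in>{-K+c..K+c} - {-R..R}. g i = 0"
    proof
      fix i assume "i \<in> {-K+c..K+c} - {-R..R}"
      hence "\<not> \<bar>i\<bar> \<le> R" by auto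
      thus "g i = 0" using assms(1) by blast
    qed
  qed simp
  also have "\<dots> = (\<Sum>y\<in>{-K..K}. g y)"
  proof (rule sum.mono_neutral_left)
    show "{-R..R} \<subseteq> {-K..K}" using assms(2) by (intro subsetI) (auto simp: abs_if split: if_splits)
    show "\<forall>i\<in>{-K..K} - {-R..R}. g i = 0"
    proof
      fix i assume "i \<in> {-K..K} - {-R..R}"
      hence "\<not> \<bar>i\<bar> \<le> R" by auto
      thus "g i = 0" using assms(1) by blast
    qed
  qed simp
  finally show ?thesis .
qed

lemma cs_complex:
  fixes u v :: "'i \<Rightarrow> complex"
  shows "(norm (\<Sum>i\<in>A. u i * v i))^2 \<le> (\<Sum>i\<in>A. (norm (u i))^2) * (\<Sum>i\<in>A. (norm (v i))^2)"
proof -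
  have "norm (\<Sum>i\<in>A. u i * v i) \<le> (\<Sum>i\<in>A. norm (u i) * norm (v i))"
    by (rule order_trans[OF norm_sum]) (simp add: norm_mult)
  hence "(norm (\<Sum>i\<in>A. u i * v i))^2 \<le> (\<Sum>i\<in>A. norm (u i) * norm (v i))^2"
    by (simp add: power_mono)
  also have "\<dots> \<le> (\<Sum>i\<in>A. (norm (u i))^2) * (\<Sum>i\<in>A. (norm (v i))^2)"
    by (rule Cauchy_Schwarz_ineq_sum)
  finally show ?thesis .
qed

lemma norm_sq_sum:
  fixes u :: "'i \<Rightarrow> complex"
  shows "complex_of_real ((norm (\<Sum>n\<in>A. u n))^2) = (\<Sum>n\<in>A. \<Sum>m\<in>A. u n * cnj (u m))"
  by (simp only: complex_norm_square) (simp add: sum_product)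

lemma shift_sum2:
  fixes g :: "int \<Rightarrow> 'a::comm_monoid_add"
  assumes "\<And>x. g x \<noteq> 0 \<Longrightarrow> \<bar>x\<bar> \<le> R" "R + \<bar>c\<bar> \<le> K"
  shows "(\<Sum>x\<in>{-K..K}. g (c + x)) = (\<Sum>x\<in>{-K..K}. g x)"
proof -
  have "(\<Sum>x\<in>{-K..K}. g (c + x)) = (\<Sum>x\<in>{-K..K}. g (x + c))" by (simp add: add.commute)
  also have "\<dots> = (\<Sum>x\<in>{-K..K}. g x)" by (rule shift_sum[OF assms])
  finally show ?thesis .
qed



locale L3 =
  fixes N :: nat and f0 f1 f2 :: "int \<times> int \<Rightarrow> complex" and f3 :: "int \<Rightarrow> complex"
  assumes N1: "N \<ge> 1"
  and bnd: "\<forall>x. norm (f0 x) \<le> 1 \<and> norm (f1 x) \<le> 1 \<and> norm (f2 x) \<le> 1"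
  and sup: "\<forall>x. x \<notin> {-2 * int N..2 * int N} \<times> {-2 * int N..2 * int N} \<longrightarrow>
          f0 x = 0 \<and> f1 x = 0 \<and> f2 x = 0"
  and b3: "\<forall>n. norm (f3 n) \<le> 1"
  and s3: "\<forall>n. n \<notin> {1..int N} \<longrightarrow> f3 n = 0"
begin

definition K :: int where "K = 10 * int N"

lemma nf0: "norm (f0 x) \<le> 1" using bnd by blast
lemma nf1: "norm (f1 x) \<le> 1" using bnd by blast
lemma nf2: "norm (f2 x) \<le> 1" using bnd by blast
lemma nf3: "norm (f3 n) \<le> 1" using b3 by blast

lemma sfa: assumes "f0 (a, b) \<noteq> 0 \<or> f1 (a, b) \<noteq> 0 \<or> f2 (a, b) \<noteq> 0"
  shows "\<bar>a\<bar> \<le> 2 * int N \<and> \<bar>b\<bar> \<le> 2 * int N"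
proof -
  have "(a, b) \<in> {-2 * int N..2 * int N} \<times> {-2 * int N..2 * int N}" using sup assms by blast
  thus ?thesis by (auto simp: abs_le_iff)
qed
lemma sf0: "f0 (a, b) \<noteq> 0 \<Longrightarrow> \<bar>a\<bar> \<le> 2 * int N \<and> \<bar>b\<bar> \<le> 2 * int N"
  using sfa by blast
lemma sf1: "f1 (a, b) \<noteq> 0 \<Longrightarrow> \<bar>a\<bar> \<le> 2 * int N \<and> \<bar>b\<bar> \<le> 2 * int N"
  using sfa by blast
lemma sf2: "f2 (a, b) \<noteq> 0 \<Longrightarrow> \<bar>a\<bar> \<le> 2 * int N \<and> \<bar>b\<bar> \<le> 2 * int N"
  using sfa by blast
lemma sf3: "f3 n \<noteq> 0 \<Longrightarrow> 1 \<le> n \<and> n \<le> int N"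
  using s3 by (metis atLeastAtMost_iff)
lemma sf3': "f3 n \<noteq> 0 \<Longrightarrow> \<bar>n\<bar> \<le> int N"
  using sf3[of n] by auto

definition "w a b n = f1 (a + n, b) * f2 (a, b + n) * f3 n"
definition "F1 p b h = f1 (p, b) * cnj (f1 (p + h, b))"
definition "F2 a c h = f2 (a, c) * cnj (f2 (a, c + h))"
definition "F3 n h = f3 n * cnj (f3 (n + h))"
definition "V p b h = (\<Sum>n\<in>{-K..K}. F2 (p - n) (b + n) h * F3 n h)"
definition "W a b = (\<Sum>n\<in>{-K..K}. w a b n)"
definition "S = (\<Sum>a\<in>{-K..K}. \<Sum>b\<in>{-K..K}. f0 (a, b) * W a b)"
definition "T1 = (\<Sum>a\<in>{-K..K}. \<Sum>b\<in>{-K..K}. (norm (W a b))^2)"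
definition "T2 = (\<Sum>p\<in>{-K..K}. \<Sum>b\<in>{-K..K}. \<Sum>h\<in>{-K..K}. (norm (V p b h))^2)"
definition "Y h k = (\<Sum>p\<in>{-K..K}. \<Sum>b\<in>{-K..K}. F2 p b h * cnj (F2 (p - k) (b + k) h))"
definition "g h k = (\<Sum>n\<in>{-K..K}. F3 n h * cnj (F3 (n + k) h))"
definition "Q = (\<Sum>h\<in>{-K..K}. \<Sum>k\<in>{-K..K}. norm (g h k))"
definition "U = (\<Sum>h\<in>{-K..K}. \<Sum>k\<in>{-K..K}. (norm (g h k))^2)"
definition "L = real (card {-K..K})"

lemma L_eq: "L = 20 * real N + 1"
  unfolding L_def K_def by simp

lemma T1_nonneg: "T1 \<ge> 0" unfolding T1_def by (intro sum_nonneg) auto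
lemma T2_nonneg: "T2 \<ge> 0" unfolding T2_def by (intro sum_nonneg) auto
lemma Q_nonneg: "Q \<ge> 0" unfolding Q_def by (intro sum_nonneg) auto
lemma U_nonneg: "U \<ge> 0" unfolding U_def by (intro sum_nonneg) auto

lemma step1: "(norm S)^2 \<le> L^2 * T1"
proof -
  have "S = (\<Sum>x\<in>{-K..K} \<times> {-K..K}. f0 x * W (fst x) (snd x))"
    unfolding S_def by (simp add: sum.cartesian_product')
  hence "(norm S)^2 \<le> (\<Sum>x\<in>{-K..K} \<times> {-K..K}. (norm (f0 x))^2) *
       (\<Sum>x\<in>{-K..K} \<times> {-K..K}. (norm (W (fst x) (snd x)))^2)"
    using cs_complex by simp
  also have "(\<Sum>x\<in>{-K..K} \<times> {-K..K}. (norm (W (fst x) (snd x)))^2) = T1"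
    unfolding T1_def by (simp add: sum.cartesian_product')
  also have "(\<Sum>x\<in>{-K..K} \<times> {-K..K}. (norm (f0 x))^2) \<le> (\<Sum>x\<in>{-K..K} \<times> {-K..K}. 1)"
    by (intro sum_mono) (simp add: nf0 power_le_one)
  also have "\<dots> = L^2" unfolding L_def by (simp add: card_cartesian_product power2_eq_square)
  finally show ?thesis using T1_nonneg by (simp add: mult_right_mono)
qed

lemma sum_nz: "(\<Sum>x\<in>A. f x) \<noteq> (0::'b::comm_monoid_add) \<Longrightarrow> \<exists>x\<in>A. f x \<noteq> 0"
  by (meson sum.neutral)

lemma swap_in: "(\<Sum>a\<in>A. \<Sum>b\<in>B. \<Sum>c\<in>C. f a b c) = (\<Sum>a\<in>A. \<Sum>c\<in>C. \<Sum>b\<in>B. f a b c)"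
  by (rule sum.cong[OF refl]) (rule sum.swap)

lemma e1: "(\<Sum>m\<in>{-K..K}. w a b n * cnj (w a b m)) = (\<Sum>h\<in>{-K..K}. w a b n * cnj (w a b (n + h)))"
proof (cases "f3 n = 0")
  case True thus ?thesis by (simp add: w_def)
next
  case False
  hence n: "\<bar>n\<bar> \<le> int N" by (rule sf3')
  have "(\<Sum>h\<in>{-K..K}. w a b n * cnj (w a b (n + h))) = (\<Sum>m\<in>{-K..K}. w a b n * cnj (w a b m))"
  proof (rule shift_sum2[where g="\<lambda>m. w a b n * cnj (w a b m)" and c=n and R="int N"])
    show "\<And>x. w a b n * cnj (w a b x) \<noteq> 0 \<Longrightarrow> \<bar>x\<bar> \<le> int N" using sf3' by (auto simp: w_def)
    show "int N + \<bar>n\<bar> \<le> K" using n unfolding K_def by simp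
  qed
  thus ?thesis by simp
qed

lemma e2: "(\<Sum>a\<in>{-K..K}. \<Sum>h\<in>{-K..K}. w a b n * cnj (w a b (n + h))) =
           (\<Sum>p\<in>{-K..K}. \<Sum>h\<in>{-K..K}. F1 p b h * (F2 (p - n) (b + n) h * F3 n h))"
proof (cases "f3 n = 0")
  case True thus ?thesis by (simp add: w_def F3_def)
next
  case False
  hence n: "\<bar>n\<bar> \<le> int N" by (rule sf3')
  have "(\<Sum>p\<in>{-K..K}. (\<lambda>a. \<Sum>h\<in>{-K..K}. w a b n * cnj (w a b (n + h))) (-n + p)) =
        (\<Sum>a\<in>{-K..K}. \<Sum>h\<in>{-K..K}. w a b n * cnj (w a b (n + h)))"
  proof (rule shift_sum2[where g="\<lambda>a. \<Sum>h\<in>{-K..K}. w a b n * cnj (w a b (n + h))" and c="-n" and R="2 * int N"])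
    fix x assume "(\<Sum>h\<in>{-K..K}. w x b n * cnj (w x b (n + h))) \<noteq> 0"
    from sum_nz[OF this] obtain h where "w x b n * cnj (w x b (n + h)) \<noteq> 0" by blast
    hence "f2 (x, b + n) \<noteq> 0" by (auto simp: w_def)
    thus "\<bar>x\<bar> \<le> 2 * int N" using sf2 by blast
  next
    show "2 * int N + \<bar>- n\<bar> \<le> K" using n unfolding K_def by simp
  qed
  moreover have "w (-n + p) b n * cnj (w (-n + p) b (n + h)) = F1 p b h * (F2 (p - n) (b + n) h * F3 n h)" for p h
  proof -
    have i: "-n + p + n = p" "-n + p = p - n" "-n + p + (n + h) = p + h" "b + (n + h) = b + n + h" by simp_all
    show ?thesis unfolding w_def F1_def F2_def F3_def complex_cnj_mult i by (simp add: ac_simps)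
  qed
  ultimately show ?thesis by simp
qed

lemma T1_eq: "complex_of_real T1 = (\<Sum>p\<in>{-K..K}. \<Sum>b\<in>{-K..K}. \<Sum>h\<in>{-K..K}. F1 p b h * V p b h)"
proof -
  have "complex_of_real T1 = (\<Sum>a\<in>{-K..K}. \<Sum>b\<in>{-K..K}. \<Sum>n\<in>{-K..K}. \<Sum>m\<in>{-K..K}. w a b n * cnj (w a b m))"
    unfolding T1_def W_def by (simp only: of_real_sum norm_sq_sum)
  also have "\<dots> = (\<Sum>a\<in>{-K..K}. \<Sum>b\<in>{-K..K}. \<Sum>n\<in>{-K..K}. \<Sum>h\<in>{-K..K}. w a b n * cnj (w a b (n + h)))"
    by (simp only: e1)
  also have "\<dots> = (\<Sum>b\<in>{-K..K}. \<Sum>a\<in>{-K..K}. \<Sum>n\<in>{-K..K}. \<Sum>h\<in>{-K..K}. w a b n * cnj (w a b (n + h)))"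
    by (rule sum.swap)
  also have "\<dots> = (\<Sum>b\<in>{-K..K}. \<Sum>n\<in>{-K..K}. \<Sum>a\<in>{-K..K}. \<Sum>h\<in>{-K..K}. w a b n * cnj (w a b (n + h)))"
    by (rule swap_in)
  also have "\<dots> = (\<Sum>b\<in>{-K..K}. \<Sum>n\<in>{-K..K}. \<Sum>p\<in>{-K..K}. \<Sum>h\<in>{-K..K}. F1 p b h * (F2 (p - n) (b + n) h * F3 n h))"
    by (simp only: e2)
  also have "\<dots> = (\<Sum>b\<in>{-K..K}. \<Sum>p\<in>{-K..K}. \<Sum>n\<in>{-K..K}. \<Sum>h\<in>{-K..K}. F1 p b h * (F2 (p - n) (b + n) h * F3 n h))"
    by (rule swap_in)
  also have "\<dots> = (\<Sum>b\<in>{-K..K}. \<Sum>p\<in>{-K..K}. \<Sum>h\<in>{-K..K}. \<Sum>n\<in>{-K..K}. F1 p b h * (F2 (p - n) (b + n) h * F3 n h))"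
    by (rule sum.cong[OF refl], rule sum.cong[OF refl], rule sum.swap)
  also have "\<dots> = (\<Sum>p\<in>{-K..K}. \<Sum>b\<in>{-K..K}. \<Sum>h\<in>{-K..K}. \<Sum>n\<in>{-K..K}. F1 p b h * (F2 (p - n) (b + n) h * F3 n h))"
    by (rule sum.swap)
  also have "\<dots> = (\<Sum>p\<in>{-K..K}. \<Sum>b\<in>{-K..K}. \<Sum>h\<in>{-K..K}. F1 p b h * V p b h)"
    unfolding V_def by (simp only: sum_distrib_left)
  finally show ?thesis .
qed

lemma step2: "T1^2 \<le> L^3 * T2"
proof -
  have "T1 = norm (complex_of_real T1)" using T1_nonneg by simp
  also have "\<dots> = norm (\<Sum>x\<in>{-K..K} \<times> {-K..K} \<times> {-K..K}. F1 (fst x) (fst (snd x)) (snd (snd x)) * V (fst x) (fst (snd x)) (snd (snd x)))"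
    unfolding T1_eq by (simp add: sum.cartesian_product')
  finally have eq: "T1 = \<dots>" .
  have "T1^2 \<le> (\<Sum>x\<in>{-K..K} \<times> {-K..K} \<times> {-K..K}. (norm (F1 (fst x) (fst (snd x)) (snd (snd x))))^2) *
       (\<Sum>x\<in>{-K..K} \<times> {-K..K} \<times> {-K..K}. (norm (V (fst x) (fst (snd x)) (snd (snd x))))^2)"
    unfolding eq by (rule cs_complex)
  also have "(\<Sum>x\<in>{-K..K} \<times> {-K..K} \<times> {-K..K}. (norm (V (fst x) (fst (snd x)) (snd (snd x))))^2) = T2"
    unfolding T2_def by (simp add: sum.cartesian_product')
  also have "(\<Sum>x\<in>{-K..K} \<times> {-K..K} \<times> {-K..K}. (norm (F1 (fst x) (fst (snd x)) (snd (snd x))))^2)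
      \<le> (\<Sum>x\<in>{-K..K} \<times> {-K..K} \<times> {-K..K}. 1)"
    by (intro sum_mono) (simp add: F1_def norm_mult nf1 power_le_one mult_le_one)
  also have "\<dots> = L^3" unfolding L_def by (simp add: card_cartesian_product power3_eq_cube)
  finally show ?thesis using T2_nonneg by (simp add: mult_right_mono)
qed

lemma f1: "(\<Sum>m\<in>{-K..K}. F2 (p - n) (b + n) h * F3 n h * cnj (F2 (p - m) (b + m) h * F3 m h)) =
   (\<Sum>k\<in>{-K..K}. F2 (p - n) (b + n) h * F3 n h * cnj (F2 (p - (n + k)) (b + (n + k)) h * F3 (n + k) h))"
proof (cases "f3 n = 0")
  case True thus ?thesis by (simp add: F3_def)
next
  case False
  hence n: "\<bar>n\<bar> \<le> int N" by (rule sf3')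
  have "(\<Sum>k\<in>{-K..K}. F2 (p - n) (b + n) h * F3 n h * cnj (F2 (p - (n + k)) (b + (n + k)) h * F3 (n + k) h)) =
     (\<Sum>m\<in>{-K..K}. F2 (p - n) (b + n) h * F3 n h * cnj (F2 (p - m) (b + m) h * F3 m h))"
  proof (rule shift_sum2[where g="\<lambda>m. F2 (p - n) (b + n) h * F3 n h * cnj (F2 (p - m) (b + m) h * F3 m h)" and c=n and R="int N"])
    show "\<And>x. F2 (p - n) (b + n) h * F3 n h * cnj (F2 (p - x) (b + x) h * F3 x h) \<noteq> 0 \<Longrightarrow> \<bar>x\<bar> \<le> int N"
      using sf3' by (auto simp: F3_def)
    show "int N + \<bar>n\<bar> \<le> K" using n unfolding K_def by simp
  qed
  thus ?thesis by simp
qed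

lemma f2: "(\<Sum>p\<in>{-K..K}. \<Sum>b\<in>{-K..K}. F2 (p - n) (b + n) h * F3 n h * cnj (F2 (p - (n + k)) (b + (n + k)) h * F3 (n + k) h)) =
   (\<Sum>p\<in>{-K..K}. \<Sum>b\<in>{-K..K}. (F2 p b h * cnj (F2 (p - k) (b + k) h)) * (F3 n h * cnj (F3 (n + k) h)))"
  (is "(\<Sum>p\<in>_. \<Sum>b\<in>_. ?G p b) = _")
proof (cases "f3 n = 0")
  case True thus ?thesis by (simp add: F3_def)
next
  case False
  hence n: "\<bar>n\<bar> \<le> int N" by (rule sf3')
  have inner: "(\<Sum>b\<in>{-K..K}. ?G p (-n + b)) = (\<Sum>b\<in>{-K..K}. ?G p b)" for p
  proof (rule shift_sum2[where g="\<lambda>b. ?G p b" and c="-n" and R="3 * int N"])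
    fix x assume "?G p x \<noteq> 0"
    hence "f2 (p - n, x + n) \<noteq> 0" by (auto simp: F2_def)
    hence "\<bar>x + n\<bar> \<le> 2 * int N" using sf2 by blast
    thus "\<bar>x\<bar> \<le> 3 * int N" using n by linarith
  next
    show "3 * int N + \<bar>- n\<bar> \<le> K" using n unfolding K_def by simp
  qed
  have outer: "(\<Sum>p\<in>{-K..K}. (\<lambda>p. \<Sum>b\<in>{-K..K}. ?G p (-n + b)) (n + p)) = (\<Sum>p\<in>{-K..K}. \<Sum>b\<in>{-K..K}. ?G p (-n + b))"
  proof (rule shift_sum2[where g="\<lambda>p. \<Sum>b\<in>{-K..K}. ?G p (-n + b)" and c="n" and R="3 * int N"])
    fix x assume "(\<Sum>b\<in>{-K..K}. ?G x (-n + b)) \<noteq> 0"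
    from sum_nz[OF this] obtain b where "?G x (-n + b) \<noteq> 0" by blast
    hence "f2 (x - n, -n + b + n) \<noteq> 0" by (auto simp: F2_def)
    hence "\<bar>x - n\<bar> \<le> 2 * int N" using sf2 by blast
    thus "\<bar>x\<bar> \<le> 3 * int N" using n by linarith
  next
    show "3 * int N + \<bar>n\<bar> \<le> K" using n unfolding K_def by simp
  qed
  have pw: "?G (n + p) (-n + b) = (F2 p b h * cnj (F2 (p - k) (b + k) h)) * (F3 n h * cnj (F3 (n + k) h))" for p b
  proof -
    have i: "n + p - n = p" "-n + b + n = b" "n + p - (n + k) = p - k" "-n + b + (n + k) = b + k" by simp_all
    show ?thesis unfolding i complex_cnj_mult by (simp add: ac_simps)
  qed
  have "(\<Sum>p\<in>{-K..K}. \<Sum>b\<in>{-K..K}. ?G p b) = (\<Sum>p\<in>{-K..K}. \<Sum>b\<in>{-K..K}. ?G p (-n + b))"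
    by (simp only: inner)
  also have "\<dots> = (\<Sum>p\<in>{-K..K}. \<Sum>b\<in>{-K..K}. ?G (n + p) (-n + b))"
    using outer by simp
  also have "\<dots> = (\<Sum>p\<in>{-K..K}. \<Sum>b\<in>{-K..K}. (F2 p b h * cnj (F2 (p - k) (b + k) h)) * (F3 n h * cnj (F3 (n + k) h)))"
    by (simp only: pw)
  finally show ?thesis .
qed

lemma prod3: "(\<Sum>p\<in>P. \<Sum>b\<in>B. a p b) * (\<Sum>n\<in>M. c n) = (\<Sum>n\<in>M. \<Sum>p\<in>P. \<Sum>b\<in>B. a p b * (c n :: complex))"
  by (simp only: sum_distrib_right sum_distrib_left)

lemma T2_eq: "complex_of_real T2 = (\<Sum>h\<in>{-K..K}. \<Sum>k\<in>{-K..K}. Y h k * g h k)"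
proof -
  let ?X = "\<lambda>p b h n k. F2 (p - n) (b + n) h * F3 n h * cnj (F2 (p - (n + k)) (b + (n + k)) h * F3 (n + k) h)"
  have "complex_of_real T2 = (\<Sum>p\<in>{-K..K}. \<Sum>b\<in>{-K..K}. \<Sum>h\<in>{-K..K}. \<Sum>n\<in>{-K..K}. \<Sum>m\<in>{-K..K}.
      F2 (p - n) (b + n) h * F3 n h * cnj (F2 (p - m) (b + m) h * F3 m h))"
    unfolding T2_def V_def by (simp only: of_real_sum norm_sq_sum)
  also have "\<dots> = (\<Sum>p\<in>{-K..K}. \<Sum>b\<in>{-K..K}. \<Sum>h\<in>{-K..K}. \<Sum>n\<in>{-K..K}. \<Sum>k\<in>{-K..K}. ?X p b h n k)"
    by (simp only: f1)
  also have "\<dots> = (\<Sum>p\<in>{-K..K}. \<Sum>h\<in>{-K..K}. \<Sum>b\<in>{-K..K}. \<Sum>n\<in>{-K..K}. \<Sum>k\<in>{-K..K}. ?X p b h n k)"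
    by (rule swap_in)
  also have "\<dots> = (\<Sum>h\<in>{-K..K}. \<Sum>p\<in>{-K..K}. \<Sum>b\<in>{-K..K}. \<Sum>n\<in>{-K..K}. \<Sum>k\<in>{-K..K}. ?X p b h n k)"
    by (rule sum.swap)
  also have "\<dots> = (\<Sum>h\<in>{-K..K}. \<Sum>p\<in>{-K..K}. \<Sum>n\<in>{-K..K}. \<Sum>b\<in>{-K..K}. \<Sum>k\<in>{-K..K}. ?X p b h n k)"
    by (rule sum.cong[OF refl], rule swap_in)
  also have "\<dots> = (\<Sum>h\<in>{-K..K}. \<Sum>p\<in>{-K..K}. \<Sum>n\<in>{-K..K}. \<Sum>k\<in>{-K..K}. \<Sum>b\<in>{-K..K}. ?X p b h n k)"
    by (rule sum.cong[OF refl], rule sum.cong[OF refl], rule sum.cong[OF refl], rule sum.swap)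
  also have "\<dots> = (\<Sum>h\<in>{-K..K}. \<Sum>n\<in>{-K..K}. \<Sum>p\<in>{-K..K}. \<Sum>k\<in>{-K..K}. \<Sum>b\<in>{-K..K}. ?X p b h n k)"
    by (rule sum.cong[OF refl], rule sum.swap)
  also have "\<dots> = (\<Sum>h\<in>{-K..K}. \<Sum>n\<in>{-K..K}. \<Sum>k\<in>{-K..K}. \<Sum>p\<in>{-K..K}. \<Sum>b\<in>{-K..K}. ?X p b h n k)"
    by (rule sum.cong[OF refl], rule swap_in)
  also have "\<dots> = (\<Sum>h\<in>{-K..K}. \<Sum>n\<in>{-K..K}. \<Sum>k\<in>{-K..K}. \<Sum>p\<in>{-K..K}. \<Sum>b\<in>{-K..K}.
       (F2 p b h * cnj (F2 (p - k) (b + k) h)) * (F3 n h * cnj (F3 (n + k) h)))"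
    by (simp only: f2)
  also have "\<dots> = (\<Sum>h\<in>{-K..K}. \<Sum>k\<in>{-K..K}. \<Sum>n\<in>{-K..K}. \<Sum>p\<in>{-K..K}. \<Sum>b\<in>{-K..K}.
       (F2 p b h * cnj (F2 (p - k) (b + k) h)) * (F3 n h * cnj (F3 (n + k) h)))"
    by (rule sum.cong[OF refl], rule sum.swap)
  also have "\<dots> = (\<Sum>h\<in>{-K..K}. \<Sum>k\<in>{-K..K}. Y h k * g h k)"
    unfolding Y_def g_def by (simp only: prod3)
  finally show ?thesis .
qed

lemma norm2: "norm (\<Sum>a\<in>A. \<Sum>b\<in>B. f a b) \<le> (\<Sum>a\<in>A. \<Sum>b\<in>B. norm (f a b :: complex))"
  by (rule order_trans[OF norm_sum], rule sum_mono, rule norm_sum)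

lemma normY: "norm (Y h k) \<le> L^2"
proof -
  have "norm (Y h k) \<le> (\<Sum>p\<in>{-K..K}. \<Sum>b\<in>{-K..K}. norm (F2 p b h * cnj (F2 (p - k) (b + k) h)))"
    unfolding Y_def by (rule norm2)
  also have "\<dots> \<le> (\<Sum>p\<in>{-K..K}. \<Sum>b\<in>{-K..K}. 1)"
    by (intro sum_mono) (simp add: F2_def norm_mult nf2 mult_le_one)
  also have "\<dots> = L^2" unfolding L_def by (simp only: sum_constant) (simp add: power2_eq_square)
  finally show ?thesis .
qed

lemma step3: "T2 \<le> L^2 * Q"
proof -
  have "T2 = norm (complex_of_real T2)" using T2_nonneg by simp
  also have "\<dots> \<le> (\<Sum>h\<in>{-K..K}. \<Sum>k\<in>{-K..K}. norm (Y h k * g h k))"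
    unfolding T2_eq by (rule norm2)
  also have "\<dots> \<le> (\<Sum>h\<in>{-K..K}. \<Sum>k\<in>{-K..K}. L^2 * norm (g h k))"
    by (intro sum_mono) (simp add: norm_mult normY mult_right_mono)
  also have "\<dots> = L^2 * Q" unfolding Q_def by (simp add: sum_distrib_left)
  finally show ?thesis .
qed

lemma step4: "Q^2 \<le> L^2 * U"
proof -
  have "Q = (\<Sum>x\<in>{-K..K} \<times> {-K..K}. 1 * norm (g (fst x) (snd x)))"
    unfolding Q_def by (simp add: sum.cartesian_product')
  hence "Q^2 \<le> (\<Sum>x\<in>{-K..K} \<times> {-K..K}. 1^2) * (\<Sum>x\<in>{-K..K} \<times> {-K..K}. (norm (g (fst x) (snd x)))^2)"
    using Cauchy_Schwarz_ineq_sum[of "\<lambda>_. (1::real)" "\<lambda>x. norm (g (fst x) (snd x))" "{-K..K} \<times> {-K..K}"] by simp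
  also have "(\<Sum>x\<in>{-K..K} \<times> {-K..K}. (norm (g (fst x) (snd x)))^2) = U"
    unfolding U_def by (simp add: sum.cartesian_product')
  also have "(\<Sum>x\<in>{-K..K} \<times> {-K..K}. (1::real)^2) = L^2"
    unfolding L_def by (simp add: card_cartesian_product power2_eq_square)
  finally show ?thesis .
qed

lemma G_eq: "mdiff k (mdiff h f3) n = F3 n h * cnj (F3 (n + k) h)"
  unfolding mdiff_def F3_def by (simp add: ac_simps)

lemma u1: "(\<Sum>m\<in>{-K..K}. mdiff k (mdiff h f3) n * cnj (mdiff k (mdiff h f3) m)) =
           (\<Sum>l\<in>{-K..K}. mdiff l (mdiff k (mdiff h f3)) n)"
proof (cases "f3 n = 0")
  case True thus ?thesis by (simp add: mdiff_def)
next
  case False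
  hence n: "\<bar>n\<bar> \<le> int N" by (rule sf3')
  have "(\<Sum>l\<in>{-K..K}. mdiff k (mdiff h f3) n * cnj (mdiff k (mdiff h f3) (n + l))) =
      (\<Sum>m\<in>{-K..K}. mdiff k (mdiff h f3) n * cnj (mdiff k (mdiff h f3) m))"
  proof (rule shift_sum2[where g="\<lambda>m. mdiff k (mdiff h f3) n * cnj (mdiff k (mdiff h f3) m)" and c=n and R="int N"])
    show "\<And>x. mdiff k (mdiff h f3) n * cnj (mdiff k (mdiff h f3) x) \<noteq> 0 \<Longrightarrow> \<bar>x\<bar> \<le> int N"
      using sf3' by (auto simp: mdiff_def)
    show "int N + \<bar>n\<bar> \<le> K" using n unfolding K_def by simp
  qed
  thus ?thesis by (simp add: mdiff_def[of _ "mdiff k (mdiff h f3)"])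
qed

lemma U_eq1: "complex_of_real U = (\<Sum>h\<in>{-K..K}. \<Sum>k\<in>{-K..K}. \<Sum>n\<in>{-K..K}. \<Sum>l\<in>{-K..K}. mdiff l (mdiff k (mdiff h f3)) n)"
proof -
  have "g h k = (\<Sum>n\<in>{-K..K}. mdiff k (mdiff h f3) n)" for h k
    unfolding g_def G_eq ..
  hence "complex_of_real U = (\<Sum>h\<in>{-K..K}. \<Sum>k\<in>{-K..K}. \<Sum>n\<in>{-K..K}. \<Sum>m\<in>{-K..K}.
      mdiff k (mdiff h f3) n * cnj (mdiff k (mdiff h f3) m))"
    unfolding U_def by (simp only: of_real_sum norm_sq_sum)
  also have "\<dots> = (\<Sum>h\<in>{-K..K}. \<Sum>k\<in>{-K..K}. \<Sum>n\<in>{-K..K}. \<Sum>l\<in>{-K..K}. mdiff l (mdiff k (mdiff h f3)) n)"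
    by (simp only: u1)
  finally show ?thesis .
qed

lemma U_eq2: "infsum (\<lambda>(x, h1, h2, h3). mdiff h1 (mdiff h2 (mdiff h3 f3)) x) (UNIV :: (int \<times> int \<times> int \<times> int) set)
   = complex_of_real U"
proof -
  let ?I = "{-K..K}"
  let ?phi = "\<lambda>(x, h1, h2, h3). mdiff h1 (mdiff h2 (mdiff h3 f3)) x"
  have supp: "z \<in> ?I \<times> ?I \<times> ?I \<times> ?I" if nz: "?phi z \<noteq> 0" for z
  proof -
    obtain x h1 h2 h3 where z: "z = (x, h1, h2, h3)" by (cases z) auto
    have "f3 x \<noteq> 0 \<and> f3 (x + h1) \<noteq> 0 \<and> f3 (x + h2) \<noteq> 0 \<and> f3 (x + h3) \<noteq> 0"
      using nz unfolding z by (auto simp: mdiff_def)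
    hence "1 \<le> x \<and> x \<le> int N \<and> 1 \<le> x + h1 \<and> x + h1 \<le> int N \<and> 1 \<le> x + h2 \<and> x + h2 \<le> int N
       \<and> 1 \<le> x + h3 \<and> x + h3 \<le> int N" using sf3 by blast
    thus ?thesis unfolding z K_def by auto
  qed
  have "infsum ?phi UNIV = infsum ?phi (?I \<times> ?I \<times> ?I \<times> ?I)"
    by (rule infsum_cong_neutral) (use supp in auto)
  also have "\<dots> = sum ?phi (?I \<times> ?I \<times> ?I \<times> ?I)" by simp
  also have "\<dots> = (\<Sum>x\<in>?I. \<Sum>h1\<in>?I. \<Sum>h2\<in>?I. \<Sum>h3\<in>?I. mdiff h1 (mdiff h2 (mdiff h3 f3)) x)"
    by (simp add: sum.cartesian_product')
  also have "\<dots> = (\<Sum>x\<in>?I. \<Sum>h1\<in>?I. \<Sum>h3\<in>?I. \<Sum>h2\<in>?I. mdiff h1 (mdiff h2 (mdiff h3 f3)) x)"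
    by (rule sum.cong[OF refl], rule sum.cong[OF refl], rule sum.swap)
  also have "\<dots> = (\<Sum>x\<in>?I. \<Sum>h3\<in>?I. \<Sum>h1\<in>?I. \<Sum>h2\<in>?I. mdiff h1 (mdiff h2 (mdiff h3 f3)) x)"
    by (rule swap_in)
  also have "\<dots> = (\<Sum>x\<in>?I. \<Sum>h3\<in>?I. \<Sum>h2\<in>?I. \<Sum>h1\<in>?I. mdiff h1 (mdiff h2 (mdiff h3 f3)) x)"
    by (rule sum.cong[OF refl], rule sum.cong[OF refl], rule sum.swap)
  also have "\<dots> = (\<Sum>h3\<in>?I. \<Sum>x\<in>?I. \<Sum>h2\<in>?I. \<Sum>h1\<in>?I. mdiff h1 (mdiff h2 (mdiff h3 f3)) x)"
    by (rule sum.swap)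
  also have "\<dots> = (\<Sum>h3\<in>?I. \<Sum>h2\<in>?I. \<Sum>x\<in>?I. \<Sum>h1\<in>?I. mdiff h1 (mdiff h2 (mdiff h3 f3)) x)"
    by (rule swap_in)
  also have "\<dots> = complex_of_real U" unfolding U_eq1 ..
  finally show ?thesis .
qed

lemma U_eq: "gowers_U3 f3 = U powr (1/8)"
  unfolding gowers_U3_def U_eq2 by simp

lemma L_nonneg: "L \<ge> 0" unfolding L_def by simp

lemma S8: "(norm S)^8 \<le> L^20 * U"
proof -
  have a: "(norm S)^2 \<le> L^2 * T1" by (rule step1)
  have "(norm S)^8 = ((norm S)^2)^4" by simp
  also have "\<dots> \<le> (L^2 * T1)^4" by (rule power_mono[OF a]) simp
  also have "\<dots> = L^8 * (T1^2)^2" by (simp add: power_mult_distrib flip: power_mult)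
  also have "\<dots> \<le> L^8 * (L^3 * T2)^2"
    by (rule mult_left_mono[OF power_mono[OF step2]]) (simp_all add: L_nonneg)
  also have "\<dots> = L^14 * T2^2" by (simp add: power_mult_distrib flip: power_mult power_add)
  also have "\<dots> \<le> L^14 * (L^2 * Q)^2"
    by (rule mult_left_mono[OF power_mono[OF step3]]) (simp_all add: L_nonneg T2_nonneg)
  also have "\<dots> = L^18 * Q^2" by (simp add: power_mult_distrib flip: power_mult power_add)
  also have "\<dots> \<le> L^18 * (L^2 * U)"
    by (rule mult_left_mono[OF step4]) (simp add: L_nonneg)
  also have "\<dots> = L^20 * U" by (simp flip: power_add)
  finally show ?thesis .
qed

lemma Snorm: "norm S \<le> (sqrt L)^5 * U powr (1/8)"
proof -
  have u8: "(U powr (1/8))^8 = U"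
  proof (cases "U = 0")
    case False
    thus ?thesis using U_nonneg by (simp add: powr_power)
  qed simp
  have "(sqrt L)^40 = ((sqrt L)^2)^20" by (simp flip: power_mult)
  also have "\<dots> = L^20" using L_nonneg by simp
  finally have l: "(sqrt L)^40 = L^20" .
  have "(norm S)^8 \<le> ((sqrt L)^5 * U powr (1/8))^8"
    using S8 by (simp add: power_mult_distrib u8 l flip: power_mult)
  thus ?thesis using power_le_imp_le_base[of "norm S" 7 "sqrt L ^ 5 * U powr (1/8)"] by (simp add: L_nonneg)
qed

lemma given_eq: "(\<Sum>((a, b), n) \<in> ({-2 * int N..2 * int N} \<times> {-2 * int N..2 * int N}) \<times> {1..int N}.
               f0 (a, b) * f1 (a + n, b) * f2 (a, b + n) * f3 n) = S"
proof -
  let ?B = "{-2 * int N..2 * int N}" and ?J = "{1..int N}" and ?I = "{-K..K}"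
  have "(\<Sum>((a, b), n) \<in> (?B \<times> ?B) \<times> ?J. f0 (a, b) * f1 (a + n, b) * f2 (a, b + n) * f3 n) =
        (\<Sum>((a, b), n) \<in> (?I \<times> ?I) \<times> ?I. f0 (a, b) * f1 (a + n, b) * f2 (a, b + n) * f3 n)"
  proof -
    have z: "f0 (a, b) * f1 (a + n, b) * f2 (a, b + n) * f3 n = 0" if "((a, b), n) \<notin> (?B \<times> ?B) \<times> ?J" for a b n
    proof -
      have "(a, b) \<notin> ?B \<times> ?B \<or> n \<notin> ?J" using that by auto
      thus "f0 (a, b) * f1 (a + n, b) * f2 (a, b + n) * f3 n = 0"
      proof
        assume "(a, b) \<notin> ?B \<times> ?B" thus ?thesis using sup[rule_format, of "(a, b)"] by simp
      next
        assume "n \<notin> ?J" thus ?thesis using s3[rule_format, of n] by simp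
      qed
    qed
    have z': "(\<lambda>((a, b), n). f0 (a, b) * f1 (a + n, b) * f2 (a, b + n) * f3 n) i = 0"
      if "i \<in> (?I \<times> ?I) \<times> ?I - (?B \<times> ?B) \<times> ?J" for i
    proof -
      obtain a b n where ii: "i = ((a, b), n)" by (metis prod.collapse)
      show ?thesis using z[of a b n] that unfolding ii by simp
    qed
    have b1: "?B \<subseteq> ?I" unfolding K_def by auto
    have b2: "?J \<subseteq> ?I" unfolding K_def by auto
    have sub: "(?B \<times> ?B) \<times> ?J \<subseteq> (?I \<times> ?I) \<times> ?I" using b1 b2 by blast
    show ?thesis
      by (rule sum.mono_neutral_left[OF _ sub]) (simp, rule ballI, rule z', assumption)
  qed
  also have "\<dots> = S"
    unfolding S_def W_def w_def by (simp add: sum.cartesian_product' sum_distrib_left mult.assoc)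
  finally show ?thesis .
qed

lemma card_eq: "real (card (({-2 * int N..2 * int N} \<times> {-2 * int N..2 * int N}) \<times> {1..int N})) \<ge> real N ^ 3"
proof -
  have "real (card (({-2 * int N..2 * int N} \<times> {-2 * int N..2 * int N}) \<times> {1..int N}))
     = (4 * real N + 1) * (4 * real N + 1) * real N"
    by (simp add: card_cartesian_product of_nat_mult)
  also have "\<dots> \<ge> real N ^ 3" by (simp add: power3_eq_cube mult_mono)
  finally show ?thesis .
qed

lemma final: "norm ((\<Sum>((a, b), n) \<in> ({-2 * int N..2 * int N} \<times> {-2 * int N..2 * int N}) \<times> {1..int N}.
               f0 (a, b) * f1 (a + n, b) * f2 (a, b + n) * f3 n)
           / of_nat (card (({-2 * int N..2 * int N} \<times> {-2 * int N..2 * int N}) \<times> {1..int N})))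
       \<le> sqrt 21 ^ 5 * real N powr (-1/2) * gowers_U3 f3"
proof -
  define c where "c = real (card (({-2 * int N..2 * int N} \<times> {-2 * int N..2 * int N}) \<times> {1..int N}))"
  define u where "u = U powr (1/8)"
  define s where "s = sqrt (real N)"
  have c3: "c \<ge> real N ^ 3" unfolding c_def by (rule card_eq)
  have s0: "s > 0" unfolding s_def using N1 by simp
  have Ns: "real N = s^2" unfolding s_def by simp
  have u0: "u \<ge> 0" unfolding u_def by simp
  have "sqrt L \<le> sqrt (21 * real N)" using N1 by (simp add: L_eq)
  also have "\<dots> = sqrt 21 * s" unfolding s_def by (simp add: real_sqrt_mult)
  finally have sL: "sqrt L \<le> sqrt 21 * s" .
  have "real N ^ 3 > 0" using N1 by simp
  hence cpos: "c > 0" using c3 by linarith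
  have lhs: "norm (S / of_nat (card (({-2 * int N..2 * int N} \<times> {-2 * int N..2 * int N}) \<times> {1..int N}))) = norm S / c"
    unfolding c_def norm_divide norm_of_nat ..
  have "norm S / c \<le> (sqrt L)^5 * u / c"
    using Snorm cpos unfolding u_def by (simp add: divide_right_mono)
  also have "\<dots> \<le> (sqrt 21 * s)^5 * u / c"
    by (intro divide_right_mono mult_right_mono power_mono sL) (simp_all add: u0 cpos less_imp_le L_nonneg)
  also have "\<dots> \<le> (sqrt 21 * s)^5 * u / s^6"
  proof (rule divide_left_mono)
    have "s^6 = real N ^ 3" by (simp add: Ns flip: power_mult)
    thus "s^6 \<le> c" using c3 by simp
  qed (use s0 u0 cpos in auto)
  also have "\<dots> = sqrt 21 ^ 5 * (1 / s) * u" using s0 by (simp add: power_mult_distrib field_simps eval_nat_numeral)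
  also have "1 / s = real N powr (-1/2)"
    unfolding s_def using N1 by (simp add: powr_minus_divide powr_half_sqrt)
  finally show ?thesis unfolding given_eq lhs U_eq u_def .
qed

end

theorem lemma3p4:
  shows "\<exists>C > (0::real). \<forall>(N::nat) (f0 :: int \<times> int \<Rightarrow> complex) f1 f2 (f3 :: int \<Rightarrow> complex).
     N \<ge> 1 \<longrightarrow>
     (\<forall>x. norm (f0 x) \<le> 1 \<and> norm (f1 x) \<le> 1 \<and> norm (f2 x) \<le> 1) \<longrightarrow>
     (\<forall>x. x \<notin> {-2 * int N..2 * int N} \<times> {-2 * int N..2 * int N} \<longrightarrow>
          f0 x = 0 \<and> f1 x = 0 \<and> f2 x = 0) \<longrightarrow>
     (\<forall>n. norm (f3 n) \<le> 1) \<longrightarrow>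
     (\<forall>n. n \<notin> {1..int N} \<longrightarrow> f3 n = 0) \<longrightarrow>
     norm ((\<Sum>((a, b), n) \<in> ({-2 * int N..2 * int N} \<times> {-2 * int N..2 * int N}) \<times> {1..int N}.
               f0 (a, b) * f1 (a + n, b) * f2 (a, b + n) * f3 n)
           / of_nat (card (({-2 * int N..2 * int N} \<times> {-2 * int N..2 * int N}) \<times> {1..int N})))
       \<le> C * real N powr (-1/2) * gowers_U3 f3"
  proof -
  have "\<forall>(N::nat) (f0 :: int \<times> int \<Rightarrow> complex) f1 f2 (f3 :: int \<Rightarrow> complex).
     N \<ge> 1 \<longrightarrow>
     (\<forall>x. norm (f0 x) \<le> 1 \<and> norm (f1 x) \<le> 1 \<and> norm (f2 x) \<le> 1) \<longrightarrow>
     (\<forall>x. x \<notin> {-2 * int N..2 * int N} \<times> {-2 * int N..2 * int N} \<longrightarrow>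
          f0 x = 0 \<and> f1 x = 0 \<and> f2 x = 0) \<longrightarrow>
     (\<forall>n. norm (f3 n) \<le> 1) \<longrightarrow>
     (\<forall>n. n \<notin> {1..int N} \<longrightarrow> f3 n = 0) \<longrightarrow>
     norm ((\<Sum>((a, b), n) \<in> ({-2 * int N..2 * int N} \<times> {-2 * int N..2 * int N}) \<times> {1..int N}.
               f0 (a, b) * f1 (a + n, b) * f2 (a, b + n) * f3 n)
           / of_nat (card (({-2 * int N..2 * int N} \<times> {-2 * int N..2 * int N}) \<times> {1..int N})))
       \<le> sqrt 21 ^ 5 * real N powr (-1/2) * gowers_U3 f3"
  proof (intro allI impI)
    fix N :: nat and f0 f1 f2 :: "int \<times> int \<Rightarrow> complex" and f3 :: "int \<Rightarrow> complex"
    assume h1: "N \<ge> 1"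
      and h2: "\<forall>x. norm (f0 x) \<le> 1 \<and> norm (f1 x) \<le> 1 \<and> norm (f2 x) \<le> 1"
      and h3: "\<forall>x. x \<notin> {-2 * int N..2 * int N} \<times> {-2 * int N..2 * int N} \<longrightarrow>
          f0 x = 0 \<and> f1 x = 0 \<and> f2 x = 0"
      and h4: "\<forall>n. norm (f3 n) \<le> 1"
      and h5: "\<forall>n. n \<notin> {1..int N} \<longrightarrow> f3 n = 0"
    interpret L3 N f0 f1 f2 f3 using h1 h2 h3 h4 h5 by unfold_locales
    show "norm ((\<Sum>((a, b), n) \<in> ({-2 * int N..2 * int N} \<times> {-2 * int N..2 * int N}) \<times> {1..int N}.
               f0 (a, b) * f1 (a + n, b) * f2 (a, b + n) * f3 n)
           / of_nat (card (({-2 * int N..2 * int N} \<times> {-2 * int N..2 * int N}) \<times> {1..int N})))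
       \<le> sqrt 21 ^ 5 * real N powr (-1/2) * gowers_U3 f3" by (rule final)
  qed
  moreover have "sqrt 21 ^ 5 > (0::real)" by simp
  ultimately show ?thesis by blast
qed

end
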